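(* Let $d \geq 2$ and $r \geq 4$ be integers, $\delta_0 \in (0,1)$, $1 \le m \le d-1$ an integer, and $p(x) \in \mathbb{Z}[i][x]$ a polynomial of degree $d-m+1$. Let $N, N_m$ be positive integers with $N \ge N_m$. Let $A \subseteq [N]$ have density $\delta \ge \delta_0$ and let $D$ be a nonempty subset of $[2N^{1/(2d)}]$. Assume the balanced function $f$ of $A$ satisfies \[ \Big| \mathbb{E}_{n\in[N]}\mathbb{E}_{x\in D}\mathbb{E}_{\mathbf{h}\in [N^{1/(8d^r)}]^{d-m}} f(n) f\big(n + p(\sigma_{d-m}(x,\mathbf{h}))\big)\Big| \ge \frac{\delta^{2^{m-1}+1}}{2^{3\cdot 2^{m-1}-2}}. \] Define \[ N_{m+1} = \max\left\{ N_m,\ \left\lceil \left(\frac{2^{3\cdot 2^m - 1}}{\delta_0^{2^m+1}}\right)^{4d^r}\right\rceil,\ \left\lceil\left(\frac{2^{3\cdot 2^m}(2d+2)^{2d+2} M_p^2}{\delta_0^{2^m+1}}\right)^2\right\rceil\right\}. \] If $N \ge N_{m+1}$, then there exists a polynomial $p'(x) \in \mathbb{Z}[i][x]$ of degree $d-m$ with $0 < M_{p'} \le 2^{2d+1} M_p N^{1/(8d^{r-1})}$ such that \[ \Big| \mathbb{E}_{n\in[N]}\mathbb{E}_{x\in D}\mathbb{E}_{\mathbf{h}\in [N^{1/(8d^r)}]^{d-m-1}} f(n) f\big(n + p'(\sigma_{d-m-1}(x,\mathbf{h}))\big)\Big| \ge \frac{\delta^{2^{m}+1}}{2^{3\cdot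 2^{m}-2}}. \]
   Context: For a real number $X\ge 1$, $[X] := \{a+bi \in \mathbb{Z}[i] : a,b \in \mathbb{Z},\ 1 \le a,b \le X\}$; $[X]^j$ is its $j$-fold Cartesian product (for $j=0$ a single empty tuple). For a finite nonempty set $S$, $\mathbb{E}_{x\in S} g(x) := |S|^{-1}\sum_{x\in S} g(x)$. A subset $A\subseteq[N]$ has density $\delta=|A|/N^2$, and its balanced function is $f(n) = \mathbf{1}_A(n) - \delta\mathbf{1}_{[N]}(n)$ for $n\in\mathbb{Z}[i]$. For $x \in \mathbb{Z}[i]$ and $\mathbf{h} = (h_1,\dots,h_j)$, $\sigma_j(x,\mathbf{h}) := x + h_1 + \dots + h_j$. For $p(x) = a_d x^d + \dots + a_0 \in \mathbb{C}[x]$ with $a_d\neq 0$, $M_p := 2\max\{|a_0|,\dots,|a_d|\}$. *)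

theory Defs
  imports "HOL-Analysis.Analysis" "HOL-Computational_Algebra.Polynomial"
begin

text \<open>Gaussian integers are represented as complex numbers with integer real and imaginary parts.\<close>
definition gauss_int :: "complex \<Rightarrow> bool" where
  "gauss_int z \<longleftrightarrow> Re z \<in> \<int> \<and> Im z \<in> \<int>"

definition gauss_poly :: "complex poly \<Rightarrow> bool" where
  "gauss_poly p \<longleftrightarrow> (\<forall>i. gauss_int (coeff p i))"

definition gbox :: "real \<Rightarrow> complex set" where
  "gbox X = {z. \<exists>a b :: int. z = Complex (of_int a) (of_int b) \<and>
                  1 \<le> a \<and> real_of_int a \<le> X \<and> 1 \<le> b \<and> real_of_int b \<le> X}"

definition gtuples :: "nat \<Rightarrow> real \<Rightarrow> complex list set" where
  "gtuples j X = {hs. length hs = j \<and> set hs \<subseteq> gbox X}"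

definition sigma :: "complex \<Rightarrow> complex list \<Rightarrow> complex" where
  "sigma x hs = x + sum_list hs"

definition avg :: "'a set \<Rightarrow> ('a \<Rightarrow> real) \<Rightarrow> real" where
  "avg S g = (\<Sum>x\<in>S. g x) / real (card S)"

definition Mp :: "complex poly \<Rightarrow> real" where
  "Mp p = 2 * Max ((\<lambda>i. norm (coeff p i)) ` {..degree p})"

definition density :: "complex set \<Rightarrow> nat \<Rightarrow> real" where
  "density A N = real (card A) / (real N)^2"

definition balanced :: "complex set \<Rightarrow> nat \<Rightarrow> complex \<Rightarrow> real" where
  "balanced A N n = indicator A n - density A N * indicator (gbox (real N)) n"

end

theory Submission
  imports Defs
begin

lemma gauss_int_add[intro]: "gauss_int a \<Longrightarrow> gauss_int b \<Longrightarrow> gauss_int (a + b)"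
  by (auto simp: gauss_int_def)
lemma gauss_int_diff[intro]: "gauss_int a \<Longrightarrow> gauss_int b \<Longrightarrow> gauss_int (a - b)"
  by (auto simp: gauss_int_def)
lemma gauss_int_mult[intro]: "gauss_int a \<Longrightarrow> gauss_int b \<Longrightarrow> gauss_int (a * b)"
  by (auto simp: gauss_int_def)
lemma gauss_int_of_nat[intro]: "gauss_int (of_nat n)"
  by (auto simp: gauss_int_def)
lemma gauss_int_0[intro]: "gauss_int 0" and gauss_int_1[intro]: "gauss_int 1"
  by (auto simp: gauss_int_def)
lemma gauss_int_power[intro]: "gauss_int a \<Longrightarrow> gauss_int (a ^ n)"
  by (induction n) auto
lemma gauss_int_sum[intro]: "(\<And>i. i \<in> S \<Longrightarrow> gauss_int (g i)) \<Longrightarrow> gauss_int (\<Sum>i\<in>S. g i)"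
  by (induction S rule: infinite_finite_induct) auto
lemma gauss_int_sum_list[intro]: "(\<And>z. z \<in> set xs \<Longrightarrow> gauss_int z) \<Longrightarrow> gauss_int (sum_list xs)"
  by (induction xs) auto
lemma gauss_int_poly[intro]: "gauss_poly p \<Longrightarrow> gauss_int z \<Longrightarrow> gauss_int (poly p z)"
  unfolding poly_altdef gauss_poly_def by auto

lemma gauss_intE:
  assumes "gauss_int z" obtains a b :: int where "z = Complex (of_int a) (of_int b)"
proof -
  from assms obtain a b where "Re z = of_int a" "Im z = of_int b"
    unfolding gauss_int_def by (auto elim!: Ints_cases)
  then show ?thesis using that[of a b] by (simp add: complex_eq_iff)
qed

lemma gbox_eq: "gbox X = (\<lambda>(a,b). Complex (of_int a) (of_int b)) ` ({1..\<lfloor>X\<rfloor>} \<times> {1..\<lfloor>X\<rfloor>})"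
  unfolding gbox_def by (auto simp: le_floor_iff image_iff)

lemma inj_Complex_int: "inj_on (\<lambda>(a::int,b::int). Complex (of_int a) (of_int b)) S"
  by (auto simp: inj_on_def)

lemma finite_gbox[simp]: "finite (gbox X)"
  unfolding gbox_eq by simp

lemma card_gbox: "card (gbox X) = (nat \<lfloor>X\<rfloor>)^2"
  unfolding gbox_eq by (simp add: card_image[OF inj_Complex_int] card_cartesian_product power2_eq_square)

lemma gbox_gauss: "z \<in> gbox X \<Longrightarrow> gauss_int z"
  unfolding gbox_def gauss_int_def by auto

lemma gbox_norm: "z \<in> gbox X \<Longrightarrow> norm z \<le> 2 * X"
proof -
  assume "z \<in> gbox X"
  then obtain a b :: int where z: "z = Complex a b" "1 \<le> a" "a \<le> X" "1 \<le> b" "b \<le> X"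
    unfolding gbox_def by auto
  have "norm z \<le> \<bar>Re z\<bar> + \<bar>Im z\<bar>" by (rule cmod_le)
  also have "\<dots> \<le> 2 * X" using z by simp
  finally show ?thesis .
qed

lemma card_gbox_N: "card (gbox (real N)) = N^2"
  by (simp add: card_gbox)

lemma card_int_interval_shift:
  fixes a :: int and N :: nat
  shows "card {max 1 (1+a) .. min (int N) (int N + a)} = nat (int N - \<bar>a\<bar>)"
  by (cases "a \<ge> 0") (auto simp: max_def min_def)

lemma card_boundary:
  fixes N :: nat and t :: complex
  assumes "gauss_int t"
  shows "real (card {m \<in> gbox (real N). m - t \<notin> gbox (real N)}) \<le> real N * (\<bar>Re t\<bar> + \<bar>Im t\<bar>)"
proof -
  obtain a b :: int where t: "t = Complex a b" using gauss_intE[OF assms] by blast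
  let ?X = "gbox (real N)"
  let ?T = "{m \<in> ?X. m - t \<in> ?X}"
  let ?Ia = "{max 1 (1+a) .. min (int N) (int N + a)}"
  let ?Ib = "{max 1 (1+b) .. min (int N) (int N + b)}"
  let ?C = "(\<lambda>(a,b). Complex (of_int a) (of_int b))"
  have sub: "?C ` (?Ia \<times> ?Ib) \<subseteq> ?T"
  proof
    fix z assume "z \<in> ?C ` (?Ia \<times> ?Ib)"
    then obtain i j where z: "z = Complex (of_int i) (of_int j)" "i \<in> ?Ia" "j \<in> ?Ib" by auto
    have "z - t = Complex (of_int (i - a)) (of_int (j - b))" using z t by (simp add: complex_eq_iff)
    thus "z \<in> ?T" using z unfolding gbox_def by fastforce
  qed
  have fT: "finite ?T" by simp
  have "card (?C ` (?Ia \<times> ?Ib)) \<le> card ?T" by (rule card_mono[OF fT sub])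
  hence cT: "nat (int N - \<bar>a\<bar>) * nat (int N - \<bar>b\<bar>) \<le> card ?T"
    by (simp only: card_image[OF inj_Complex_int] card_cartesian_product card_int_interval_shift)
  have eq: "{m \<in> ?X. m - t \<notin> ?X} = ?X - ?T" by auto
  have "card (?X - ?T) = card ?X - card ?T" by (rule card_Diff_subset) auto
  hence c: "card {m \<in> ?X. m - t \<notin> ?X} = N^2 - card ?T" using eq card_gbox_N by simp
  have le: "card ?T \<le> N^2" using card_mono[of ?X ?T] card_gbox_N by simp
  have "real (N^2) - real (nat (int N - \<bar>a\<bar>) * nat (int N - \<bar>b\<bar>)) \<le> real N * (\<bar>a\<bar> + \<bar>b\<bar>)"
  proof (cases "\<bar>a\<bar> \<le> int N \<and> \<bar>b\<bar> \<le> int N")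
    case True
    hence "real (nat (int N - \<bar>a\<bar>) * nat (int N - \<bar>b\<bar>)) = (real N - \<bar>a\<bar>) * (real N - \<bar>b\<bar>)"
      by (simp add: of_nat_nat)
    moreover have "\<bar>real_of_int a\<bar> * \<bar>b\<bar> \<ge> 0" by simp
    ultimately show ?thesis by (simp add: algebra_simps power2_eq_square)
  next
    case False
    hence "real (nat (int N - \<bar>a\<bar>)) * real (nat (int N - \<bar>b\<bar>)) = 0" by auto
    moreover have "real N * real N \<le> real N * (\<bar>a\<bar> + \<bar>b\<bar>)"
      using False by (intro mult_left_mono) auto
    ultimately show ?thesis unfolding power2_eq_square of_nat_mult by linarith
  qed
  moreover have "real (nat (int N - \<bar>a\<bar>) * nat (int N - \<bar>b\<bar>)) \<le> real (card ?T)"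
    using cT of_nat_mono by blast
  moreover have "real (card {m \<in> ?X. m - t \<notin> ?X}) = real (N^2) - real (card ?T)"
    using c le by (simp add: of_nat_diff)
  ultimately show ?thesis unfolding t by simp
qed

lemma shift_sum:
  fixes N :: nat and F :: "complex \<Rightarrow> real" and t :: complex
  assumes "gauss_int t"
    and supp: "\<And>z. z \<notin> gbox (real N) \<Longrightarrow> F z = 0"
    and bnd: "\<And>z. \<bar>F z\<bar> \<le> 1"
  shows "\<bar>(\<Sum>n\<in>gbox (real N). F (n + t)) - (\<Sum>n\<in>gbox (real N). F n)\<bar> \<le> real N * (\<bar>Re t\<bar> + \<bar>Im t\<bar>)"
proof -
  let ?X = "gbox (real N)"
  let ?T = "{m \<in> ?X. m - t \<in> ?X}"
  let ?S = "{n \<in> ?X. n + t \<in> ?X}"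
  have "(\<Sum>n\<in>?X. F (n + t)) = (\<Sum>n\<in>?S. F (n + t))"
    by (rule sum.mono_neutral_right) (auto simp: supp)
  also have "\<dots> = (\<Sum>m\<in>?T. F m)"
  proof (rule sum.reindex_bij_witness[where i="\<lambda>m. m - t" and j="\<lambda>n. n + t"]) qed auto
  finally have 1: "(\<Sum>n\<in>?X. F (n + t)) = (\<Sum>m\<in>?T. F m)" .
  have 2: "(\<Sum>n\<in>?X. F n) = (\<Sum>m\<in>?T. F m) + (\<Sum>m\<in>{m \<in> ?X. m - t \<notin> ?X}. F m)"
    by (subst sum.union_disjoint[symmetric]) (auto intro: sum.cong)
  have "\<bar>\<Sum>m\<in>{m \<in> ?X. m - t \<notin> ?X}. F m\<bar> \<le> (\<Sum>m\<in>{m \<in> ?X. m - t \<notin> ?X}. 1)"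
    by (rule order_trans[OF sum_abs]) (rule sum_mono, rule bnd)
  also have "\<dots> = real (card {m \<in> ?X. m - t \<notin> ?X})" by simp
  also have "\<dots> \<le> real N * (\<bar>Re t\<bar> + \<bar>Im t\<bar>)" by (rule card_boundary[OF assms(1)])
  finally show ?thesis using 1 2 by simp
qed

lemma Mp_nonneg: "0 \<le> Mp p"
  unfolding Mp_def by (auto intro: order_trans[OF _ Max_ge[where x="norm (coeff p 0)"]])

lemma coeff_le_Mp: "norm (coeff p i) \<le> Mp p / 2"
proof (cases "i \<le> degree p")
  case True thus ?thesis unfolding Mp_def by (auto intro: Max_ge)
next
  case False thus ?thesis using Mp_nonneg[of p] by (simp add: coeff_eq_0)
qed

lemma poly_norm_bound:
  "norm (poly p z) \<le> real (degree p + 1) * (Mp p / 2) * (max 1 (norm z)) ^ degree p"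
proof -
  have "norm (poly p z) \<le> (\<Sum>i\<le>degree p. norm (coeff p i * z ^ i))"
    unfolding poly_altdef by (rule norm_sum)
  also have "\<dots> \<le> (\<Sum>i\<le>degree p. (Mp p / 2) * (max 1 (norm z)) ^ degree p)"
  proof (rule sum_mono)
    fix i assume i: "i \<in> {..degree p}"
    have "norm (z ^ i) \<le> (max 1 (norm z)) ^ i" unfolding norm_power by (rule power_mono) auto
    also have "\<dots> \<le> (max 1 (norm z)) ^ degree p" using i by (intro power_increasing) auto
    finally have "norm (z ^ i) \<le> (max 1 (norm z)) ^ degree p" .
    thus "norm (coeff p i * z ^ i) \<le> (Mp p / 2) * (max 1 (norm z)) ^ degree p"
      unfolding norm_mult by (intro mult_mono coeff_le_Mp) (auto simp: Mp_nonneg)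
  qed
  also have "\<dots> = real (degree p + 1) * (Mp p / 2) * (max 1 (norm z)) ^ degree p" by simp
  finally show ?thesis .
qed

definition dcoef :: "complex poly \<Rightarrow> complex \<Rightarrow> complex \<Rightarrow> nat \<Rightarrow> complex" where
  "dcoef p h k i = (\<Sum>j\<le>degree p. coeff p j * of_nat (j choose i) * (k^(j-i) - h^(j-i)))"

definition dpoly :: "complex poly \<Rightarrow> complex \<Rightarrow> complex \<Rightarrow> complex poly" where
  "dpoly p h k = (\<Sum>i\<le>degree p. monom (dcoef p h k i) i)"

lemma coeff_dpoly: "coeff (dpoly p h k) n = (if n \<le> degree p then dcoef p h k n else 0)"
  unfolding dpoly_def by (simp add: coeff_sum)

lemma binom_shift: "(y + k::complex) ^ j = (\<Sum>i\<le>D. of_nat (j choose i) * y ^ i * k ^ (j - i))"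
  if "j \<le> D"
proof -
  have "(y + k) ^ j = (\<Sum>i\<le>j. of_nat (j choose i) * y ^ i * k ^ (j - i))" by (rule binomial_ring)
  also have "\<dots> = (\<Sum>i\<le>D. of_nat (j choose i) * y ^ i * k ^ (j - i))"
    by (rule sum.mono_neutral_left) (use that in auto)
  finally show ?thesis .
qed

lemma poly_dpoly: "poly (dpoly p h k) y = poly p (y + k) - poly p (y + h)"
proof -
  have "poly (dpoly p h k) y = (\<Sum>i\<le>degree p. dcoef p h k i * y ^ i)"
    unfolding dpoly_def by (simp add: poly_sum poly_monom)
  also have "\<dots> = (\<Sum>i\<le>degree p. \<Sum>j\<le>degree p. coeff p j * (of_nat (j choose i) * y ^ i * k^(j-i) - of_nat (j choose i) * y ^ i * h^(j-i)))"
    unfolding dcoef_def sum_distrib_right by (intro sum.cong refl) (simp add: algebra_simps)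
  also have "\<dots> = (\<Sum>j\<le>degree p. coeff p j * ((\<Sum>i\<le>degree p. of_nat (j choose i) * y ^ i * k^(j-i)) - (\<Sum>i\<le>degree p. of_nat (j choose i) * y ^ i * h^(j-i))))"
    by (subst sum.swap) (simp add: sum_subtractf[symmetric] sum_distrib_left)
  also have "\<dots> = (\<Sum>j\<le>degree p. coeff p j * ((y + k) ^ j - (y + h) ^ j))"
    by (intro sum.cong refl) (simp add: binom_shift)
  also have "\<dots> = poly p (y + k) - poly p (y + h)"
    unfolding poly_altdef by (simp add: algebra_simps sum_subtractf)
  finally show ?thesis .
qed

lemma dcoef_top: "dcoef p h k (degree p) = 0"
  unfolding dcoef_def by (intro sum.neutral) (auto simp: binomial_eq_0)

lemma dcoef_sub:
  assumes "degree p \<ge> 1"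
  shows "dcoef p h k (degree p - 1) = lead_coeff p * of_nat (degree p) * (k - h)"
proof -
  let ?D = "degree p"
  have "dcoef p h k (?D - 1) = (\<Sum>j\<in>{?D}. coeff p j * of_nat (j choose (?D - 1)) * (k^(j-(?D - 1)) - h^(j-(?D - 1))))"
    unfolding dcoef_def
  proof (rule sum.mono_neutral_right)
    show "\<forall>j\<in>{..?D} - {?D}. coeff p j * of_nat (j choose (?D - 1)) * (k^(j-(?D - 1)) - h^(j-(?D - 1))) = 0"
    proof
      fix j assume "j \<in> {..?D} - {?D}"
      hence "j < ?D - 1 \<or> j = ?D - 1" using assms by auto
      thus "coeff p j * of_nat (j choose (?D - 1)) * (k^(j-(?D - 1)) - h^(j-(?D - 1))) = 0"
        by (auto simp: binomial_eq_0)
    qed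
  qed auto
  also have "\<dots> = lead_coeff p * of_nat (degree p) * (k - h)"
  proof -
    have "?D choose (?D - 1) = ?D choose 1" using binomial_symmetric[of 1 ?D] assms by simp
    thus ?thesis using assms by (simp add: choose_one)
  qed
  finally show ?thesis .
qed

lemma degree_dpoly:
  assumes "degree p \<ge> 1" "k \<noteq> h"
  shows "degree (dpoly p h k) = degree p - 1"
proof (rule antisym)
  show "degree (dpoly p h k) \<le> degree p - 1"
  proof (rule degree_le, intro allI impI)
    fix i assume "degree p - 1 < i"
    hence "i > degree p \<or> i = degree p" by auto
    thus "coeff (dpoly p h k) i = 0" by (auto simp: coeff_dpoly dcoef_top)
  qed
next
  have "p \<noteq> 0" using assms by auto
  hence "coeff (dpoly p h k) (degree p - 1) \<noteq> 0"
    using assms by (simp only: coeff_dpoly dcoef_sub) simp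
  thus "degree p - 1 \<le> degree (dpoly p h k)" by (rule le_degree)
qed

lemma gauss_dpoly:
  assumes "gauss_poly p" "gauss_int h" "gauss_int k"
  shows "gauss_poly (dpoly p h k)"
  unfolding gauss_poly_def
proof
  fix n
  have "\<And>j. gauss_int (coeff p j)" using assms(1) unfolding gauss_poly_def by blast
  thus "gauss_int (coeff (dpoly p h k) n)"
    unfolding coeff_dpoly dcoef_def using assms by auto
qed

lemma choose_pow2_le: "(j choose i) * 2 ^ (j - i) \<le> (3::nat) ^ j"
proof (cases "i \<le> j")
  case True
  have e: "(1 + 2::nat) = 3" by simp
  have "(3::nat) ^ j = (\<Sum>l\<le>j. (j choose l) * 2 ^ (j - l))" using binomial_ring[of "1::nat" 2 j] unfolding e by simp
  also have "\<dots> \<ge> (j choose i) * 2 ^ (j - i)"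
    by (rule member_le_sum) (use True in auto)
  finally show ?thesis by simp
qed (simp add: binomial_eq_0)

lemma norm_dcoef:
  assumes "norm h \<le> 2 * H" "norm k \<le> 2 * H" "1 \<le> H"
  shows "norm (dcoef p h k i) \<le> Mp p * H ^ degree p * (\<Sum>j\<le>degree p. 3 ^ j)"
proof -
  have "norm (dcoef p h k i) \<le> (\<Sum>j\<le>degree p. norm (coeff p j * of_nat (j choose i) * (k^(j-i) - h^(j-i))))"
    unfolding dcoef_def by (rule norm_sum)
  also have "\<dots> \<le> (\<Sum>j\<le>degree p. Mp p * H ^ degree p * 3 ^ j)"
  proof (rule sum_mono)
    fix j assume j: "j \<in> {..degree p}"
    have hk: "norm (k^(j-i) - h^(j-i)) \<le> 2 * (2 ^ (j - i) * H ^ degree p)"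
    proof -
      have "H ^ (j - i) \<le> H ^ degree p" using j assms(3) by (intro power_increasing) auto
      hence b: "(2 * H) ^ (j - i) \<le> 2 ^ (j - i) * H ^ degree p" by (simp add: power_mult_distrib)
      have "norm (k^(j-i)) \<le> (2 * H) ^ (j - i)" unfolding norm_power by (rule power_mono) (use assms in auto)
      moreover have "norm (h^(j-i)) \<le> (2 * H) ^ (j - i)" unfolding norm_power by (rule power_mono) (use assms in auto)
      ultimately show ?thesis using norm_triangle_ineq4[of "k^(j-i)" "h^(j-i)"] b by linarith
    qed
    have c: "real (j choose i) * 2 ^ (j - i) \<le> 3 ^ j"
    proof -
      have "real ((j choose i) * 2 ^ (j - i)) \<le> real ((3::nat) ^ j)" by (rule of_nat_mono[OF choose_pow2_le])
      thus ?thesis by simp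
    qed
    have "norm (coeff p j * of_nat (j choose i) * (k^(j-i) - h^(j-i)))
        = norm (coeff p j) * real (j choose i) * norm (k^(j-i) - h^(j-i))"
      by (simp add: norm_mult)
    also have "\<dots> \<le> (Mp p / 2) * real (j choose i) * (2 * (2 ^ (j - i) * H ^ degree p))"
      by (intro mult_mono coeff_le_Mp hk) (auto intro: mult_nonneg_nonneg Mp_nonneg)
    also have "\<dots> = Mp p * H ^ degree p * (real (j choose i) * 2 ^ (j - i))" by simp
    also have "\<dots> \<le> Mp p * H ^ degree p * 3 ^ j"
      by (intro mult_left_mono c) (use Mp_nonneg assms(3) in auto)
    finally show "norm (coeff p j * of_nat (j choose i) * (k^(j-i) - h^(j-i))) \<le> Mp p * H ^ degree p * 3 ^ j" .
  qed
  also have "\<dots> = Mp p * H ^ degree p * (\<Sum>j\<le>degree p. 3 ^ j)" by (simp add: sum_distrib_left)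
  finally show ?thesis .
qed

lemma geom3: "2 * (\<Sum>j\<le>D. (3::nat) ^ j) + 1 = 3 ^ (D + 1)"
  by (induction D) auto

lemma pow32: "d \<ge> 2 \<Longrightarrow> (3::nat) ^ (d + 1) \<le> 2 ^ (2 * d + 1)"
proof (induction d rule: nat_induct_at_least)
  case base thus ?case by simp
next
  case (Suc n)
  have "(3::nat) ^ (Suc n + 1) = 3 * 3 ^ (n + 1)" by simp
  also have "\<dots> \<le> 4 * 2 ^ (2 * n + 1)" using Suc.IH by simp
  also have "\<dots> = 2 ^ (2 * Suc n + 1)" by (simp add: power_add)
  finally show ?case .
qed

lemma sum3_bound:
  assumes "D \<le> d" "d \<ge> 2"
  shows "2 * (\<Sum>j\<le>D. (3::real) ^ j) \<le> 2 ^ (2 * d + 1)"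
proof -
  have "2 * (\<Sum>j\<le>D. (3::nat) ^ j) \<le> 3 ^ (D + 1)" using geom3[of D] by linarith
  also have "\<dots> \<le> 3 ^ (d + 1)" using assms by (intro power_increasing) auto
  also have "\<dots> \<le> 2 ^ (2 * d + 1)" using pow32 assms by blast
  finally have "2 * (\<Sum>j\<le>D. (3::nat) ^ j) \<le> 2 ^ (2 * d + 1)" .
  hence "real (2 * (\<Sum>j\<le>D. (3::nat) ^ j)) \<le> real (2 ^ (2 * d + 1))" by (rule of_nat_mono)
  thus ?thesis by simp
qed

lemma Mp_dpoly:
  assumes "norm h \<le> 2 * H" "norm k \<le> 2 * H" "1 \<le> H" "degree p \<le> d" "d \<ge> 2"
  shows "Mp (dpoly p h k) \<le> 2 ^ (2 * d + 1) * Mp p * H ^ d"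
proof -
  have nn: "0 \<le> Mp p * H ^ degree p * (\<Sum>j\<le>degree p. 3 ^ j)"
    using assms(3) by (intro mult_nonneg_nonneg sum_nonneg) (auto simp: Mp_nonneg)
  have fin: "finite ((\<lambda>i. norm (coeff (dpoly p h k) i)) ` {..degree (dpoly p h k)})" by simp
  have "Max ((\<lambda>i. norm (coeff (dpoly p h k) i)) ` {..degree (dpoly p h k)}) \<le> Mp p * H ^ degree p * (\<Sum>j\<le>degree p. 3 ^ j)"
    using norm_dcoef[OF assms(1-3)] Mp_nonneg[of p] assms(3) nn
    by (subst Max_le_iff[OF fin]) (auto simp: coeff_dpoly intro: mult_nonneg_nonneg sum_nonneg)
  moreover have "Mp (dpoly p h k) = 2 * Max ((\<lambda>i. norm (coeff (dpoly p h k) i)) ` {..degree (dpoly p h k)})"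
    by (simp add: Mp_def)
  ultimately have "Mp (dpoly p h k) \<le> 2 * (Mp p * H ^ degree p * (\<Sum>j\<le>degree p. 3 ^ j))"
    by linarith
  also have "\<dots> = Mp p * H ^ degree p * (2 * (\<Sum>j\<le>degree p. 3 ^ j))" by simp
  also have "\<dots> \<le> Mp p * H ^ d * 2 ^ (2 * d + 1)"
  proof -
    have s: "2 * (\<Sum>j\<le>degree p. (3::real)^j) \<le> 2^(2*d+1)" by (rule sum3_bound) (use assms in auto)
    have hp: "H^degree p \<le> H^d" by (rule power_increasing) (use assms in auto)
    show ?thesis by (intro mult_mono) (use s hp Mp_nonneg assms in \<open>auto intro: sum_nonneg\<close>)
  qed
  finally show ?thesis by (simp add: mult_ac)
qed

lemma Mp_pos:
  assumes "p \<noteq> 0" shows "0 < Mp p"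
proof -
  have "0 < norm (lead_coeff p)" using assms by simp
  also have "\<dots> \<le> Max ((\<lambda>i. norm (coeff p i)) ` {..degree p})" by (rule Max_ge) auto
  finally show ?thesis unfolding Mp_def by simp
qed

lemma Mp_ge2:
  assumes "p \<noteq> 0" "gauss_poly p" shows "2 \<le> Mp p"
proof -
  have g: "gauss_int (lead_coeff p)" using assms unfolding gauss_poly_def by blast
  have nz: "lead_coeff p \<noteq> 0" using assms by simp
  obtain a b :: int where ab: "lead_coeff p = Complex a b" using gauss_intE[OF g] by blast
  have "a \<noteq> 0 \<or> b \<noteq> 0" using nz ab by (auto simp: complex_eq_iff)
  hence "1 \<le> \<bar>a\<bar> \<or> 1 \<le> \<bar>b\<bar>" by auto
  hence "1 \<le> \<bar>real_of_int a\<bar> \<or> 1 \<le> \<bar>real_of_int b\<bar>" by (metis of_int_1_le_iff of_int_abs)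
  moreover have "\<bar>Re (lead_coeff p)\<bar> \<le> norm (lead_coeff p)" "\<bar>Im (lead_coeff p)\<bar> \<le> norm (lead_coeff p)"
    by (rule abs_Re_le_cmod, rule abs_Im_le_cmod)
  ultimately have "1 \<le> norm (lead_coeff p)" using ab by auto
  also have "\<dots> \<le> Max ((\<lambda>i. norm (coeff p i)) ` {..degree p})" by (rule Max_ge) auto
  finally show ?thesis unfolding Mp_def by simp
qed

lemma gtuples_0: "gtuples 0 Y = {[]}"
  unfolding gtuples_def by auto

lemma gtuples_Suc: "gtuples (Suc j) Y = (\<lambda>(h,hs). h # hs) ` (gbox Y \<times> gtuples j Y)"
proof
  show "gtuples (Suc j) Y \<subseteq> (\<lambda>(h,hs). h # hs) ` (gbox Y \<times> gtuples j Y)"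
  proof
    fix hs assume "hs \<in> gtuples (Suc j) Y"
    then obtain h t where "hs = h # t" "length t = j" "h \<in> gbox Y" "set t \<subseteq> gbox Y"
      unfolding gtuples_def by (cases hs) auto
    thus "hs \<in> (\<lambda>(h,hs). h # hs) ` (gbox Y \<times> gtuples j Y)"
      unfolding gtuples_def by auto
  qed
qed (auto simp: gtuples_def)

lemma inj_Cons: "inj_on (\<lambda>(h,hs). h # hs) S"
  by (auto simp: inj_on_def)

lemma finite_gtuples[simp]: "finite (gtuples j Y)"
  by (induction j) (auto simp: gtuples_0 gtuples_Suc)

lemma card_gtuples_Suc: "card (gtuples (Suc j) Y) = card (gbox Y) * card (gtuples j Y)"
  unfolding gtuples_Suc by (simp add: card_image[OF inj_Cons] card_cartesian_product)

lemma card_gtuples_pos: "card (gbox Y) > 0 \<Longrightarrow> card (gtuples j Y) > 0"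
  by (induction j) (auto simp: gtuples_0 card_gtuples_Suc)

lemma sum_gtuples_Suc:
  "(\<Sum>hs\<in>gtuples (Suc j) Y. F hs) = (\<Sum>h\<in>gbox Y. \<Sum>hs\<in>gtuples j Y. F (h # hs))"
  unfolding gtuples_Suc
  by (subst sum.reindex[OF inj_Cons]) (simp add: sum.cartesian_product case_prod_unfold)

lemma sigma_Cons: "sigma x (h # hs) = sigma x hs + h"
  unfolding sigma_def by simp

lemma gtuples_mem: "hs \<in> gtuples j Y \<Longrightarrow> length hs = j \<and> set hs \<subseteq> gbox Y"
  unfolding gtuples_def by auto

lemma norm_sum_list_gbox:
  assumes "set hs \<subseteq> gbox Y"
  shows "norm (sum_list hs) \<le> real (length hs) * (2 * Y)"
  using assms
proof (induction hs)
  case (Cons h t)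
  have "norm (sum_list (h # t)) \<le> norm h + norm (sum_list t)" by (simp add: norm_triangle_ineq)
  also have "\<dots> \<le> 2 * Y + real (length t) * (2 * Y)"
    using Cons gbox_norm by (intro add_mono) auto
  finally show ?case by (simp add: algebra_simps)
qed simp

lemma final_arith:
  fixes a :: nat and \<delta> \<delta>0 E cB :: real
  assumes "a \<ge> 1" "0 < \<delta>0" "\<delta>0 \<le> \<delta>"
    and "E \<le> \<delta>0 ^ (2*a+1) / 2 ^ (6*a+1)" and "1 / cB \<le> \<delta>0 ^ (2*a+1) / 2 ^ (6*a-3)"
  shows "(\<delta> ^ (a+1) / 2 ^ (3*a-2))\<^sup>2 / \<delta> - E - 1 / cB \<ge> \<delta> ^ (2*a+1) / 2 ^ (6*a-2)"
proof -
  define c :: real where "c = 2 ^ (6*a-4)"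
  have cpos: "c > 0" unfolding c_def by simp
  have e1: "(2::real) ^ (3*a-2) * 2 ^ (3*a-2) = c" unfolding c_def power_add[symmetric]
    using assms(1) by (intro arg_cong[where f="\<lambda>n. (2::real)^n"]) simp
  have e2: "(2::real) ^ (6*a+1) = 32 * c" unfolding c_def
  proof -
    have n: "6*a+1 = 5 + (6*a-4)" using assms(1) by simp
    show "(2::real) ^ (6*a+1) = 32 * 2 ^ (6*a-4)" by (subst n) (simp add: power_add)
  qed
  have e3: "(2::real) ^ (6*a-3) = 2 * c" unfolding c_def
  proof -
    have n: "6*a-3 = 1 + (6*a-4)" using assms(1) by simp
    show "(2::real) ^ (6*a-3) = 2 * 2 ^ (6*a-4)" by (subst n) (simp add: power_add)
  qed
  have e4: "(2::real) ^ (6*a-2) = 4 * c" unfolding c_def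
  proof -
    have n: "6*a-2 = 2 + (6*a-4)" using assms(1) by simp
    show "(2::real) ^ (6*a-2) = 4 * 2 ^ (6*a-4)" by (subst n) (simp add: power_add)
  qed
  have dpos: "\<delta> > 0" using assms by simp
  have w: "\<delta>0 ^ (2*a+1) \<le> \<delta> ^ (2*a+1)" using assms by (intro power_mono) auto
  have main: "(\<delta> ^ (a+1) / 2 ^ (3*a-2))\<^sup>2 / \<delta> = \<delta> ^ (2*a+1) / c"
  proof -
    have "(\<delta> ^ (a+1))\<^sup>2 = \<delta> * \<delta> ^ (2*a+1)"
    proof -
      have n: "(a+1)*2 = Suc (2*a+1)" by simp
      show ?thesis by (simp only: power_mult[symmetric] n power_Suc)
    qed
    thus ?thesis using dpos e1 by (simp add: power_divide field_simps power2_eq_square)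
  qed
  have w32: "\<delta>0 ^ (2*a+1) / (32 * c) \<le> \<delta> ^ (2*a+1) / (32 * c)"
    by (rule divide_right_mono[OF w]) (use cpos in simp)
  have w2: "\<delta>0 ^ (2*a+1) / (2 * c) \<le> \<delta> ^ (2*a+1) / (2 * c)"
    by (rule divide_right_mono[OF w]) (use cpos in simp)
  have "E \<le> \<delta> ^ (2*a+1) / (32 * c)" using assms(4) w32 unfolding e2 by linarith
  moreover have "1 / cB \<le> \<delta> ^ (2*a+1) / (2 * c)" using assms(5) w2 unfolding e3 by linarith
  ultimately have "(\<delta> ^ (a+1) / 2 ^ (3*a-2))\<^sup>2 / \<delta> - E - 1 / cB \<ge> \<delta> ^ (2*a+1) / c - \<delta> ^ (2*a+1) / (32 * c) - \<delta> ^ (2*a+1) / (2 * c)"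
    unfolding main by linarith
  moreover have "\<delta> ^ (2*a+1) / c - \<delta> ^ (2*a+1) / (32 * c) - \<delta> ^ (2*a+1) / (2 * c) \<ge> \<delta> ^ (2*a+1) / (4 * c)"
    using cpos dpos by (simp add: field_simps)
  ultimately show ?thesis unfolding e4 by linarith
qed

lemma swap3: "(\<Sum>a\<in>A. \<Sum>b\<in>B. \<Sum>c\<in>C. F a b c) = (\<Sum>b\<in>B. \<Sum>c\<in>C. \<Sum>a\<in>A. F a b c)"
proof -
  have "(\<Sum>a\<in>A. \<Sum>b\<in>B. \<Sum>c\<in>C. F a b c) = (\<Sum>b\<in>B. \<Sum>a\<in>A. \<Sum>c\<in>C. F a b c)" by (rule sum.swap)
  also have "\<dots> = (\<Sum>b\<in>B. \<Sum>c\<in>C. \<Sum>a\<in>A. F a b c)" by (rule sum.cong[OF refl], rule sum.swap)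
  finally show ?thesis .
qed

lemma swap4: "(\<Sum>n\<in>A. \<Sum>u\<in>B. \<Sum>h\<in>C. \<Sum>k\<in>E. F n u h k) = (\<Sum>h\<in>C. \<Sum>k\<in>E. \<Sum>n\<in>A. \<Sum>u\<in>B. F n u h k)"
proof -
  have "(\<Sum>n\<in>A. \<Sum>u\<in>B. \<Sum>h\<in>C. \<Sum>k\<in>E. F n u h k) = (\<Sum>n\<in>A. \<Sum>h\<in>C. \<Sum>k\<in>E. \<Sum>u\<in>B. F n u h k)"
    by (rule sum.cong[OF refl], rule swap3)
  also have "\<dots> = (\<Sum>h\<in>C. \<Sum>k\<in>E. \<Sum>n\<in>A. \<Sum>u\<in>B. F n u h k)" by (rule swap3)
  finally show ?thesis .
qed

lemma E_bound:
  fixes s M w0 :: real and a d :: nat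
  assumes "s \<ge> 2 ^ (6*a) * real (2*d+2) ^ (2*d+2) * M\<^sup>2 / w0" "M \<ge> 2" "w0 > 0"
  shows "real (d+1) * M * real (2*d+2) ^ d / s \<le> w0 / 2 ^ (6*a+1)"
proof -
  define Z where "Z = real (2*d+2) ^ (2*d+2)"
  have Zpos: "Z > 0" unfolding Z_def by simp
  have dZ: "real (d+1) * real (2*d+2) ^ d \<le> Z"
  proof -
    have "real (d+1) \<le> real (2*d+2) ^ (d+2)"
    proof -
      have "real (d+1) \<le> real (2*d+2)" by simp
      also have "\<dots> = real (2*d+2) ^ 1" by simp
      also have "\<dots> \<le> real (2*d+2) ^ (d+2)" by (rule power_increasing) auto
      finally show ?thesis .
    qed
    hence "real (d+1) * real (2*d+2) ^ d \<le> real (2*d+2) ^ (d+2) * real (2*d+2) ^ d"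
      by (intro mult_right_mono) auto
    also have "\<dots> = Z" unfolding Z_def by (simp add: power_add[symmetric])
    finally show ?thesis .
  qed
  define Q where "Q = 2 ^ (6*a) * Z * M\<^sup>2 / w0"
  have Qpos: "Q > 0" unfolding Q_def using Zpos assms by simp
  have sQ: "s \<ge> Q" using assms(1) unfolding Q_def Z_def by simp
  have "real (d+1) * M * real (2*d+2) ^ d / s \<le> Z * M / s"
    using dZ assms Qpos sQ by (intro divide_right_mono) (auto simp: mult.commute mult.left_commute intro: mult_right_mono)
  also have "\<dots> \<le> Z * M / Q" using Qpos sQ Zpos assms by (intro divide_left_mono) auto
  also have "\<dots> = w0 / (2 ^ (6*a) * M)" unfolding Q_def using Zpos assms
    by (simp add: field_simps power2_eq_square)
  also have "\<dots> \<le> w0 / (2 ^ (6*a) * 2)" using assms by (intro divide_left_mono) auto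
  also have "\<dots> = w0 / 2 ^ (6*a+1)" by simp
  finally show ?thesis .
qed

theorem mainTheorem4:
  fixes d r m N Nm :: nat and \<delta>0 :: real and p :: "complex poly"
    and A D :: "complex set"
  assumes "d \<ge> 2" and "r \<ge> 4" and "0 < \<delta>0" and "\<delta>0 < 1"
    and "1 \<le> m" and "m \<le> d - 1"
    and "gauss_poly p" and "degree p = d - m + 1"
    and "0 < N" and "0 < Nm" and "Nm \<le> N"
    and "A \<subseteq> gbox (real N)" and "density A N \<ge> \<delta>0"
    and "D \<noteq> {}" and "D \<subseteq> gbox (2 * real N powr (1 / (2 * real d)))"
    and "\<bar>avg (gbox (real N)) (\<lambda>n. avg D (\<lambda>x.
            avg (gtuples (d - m) (real N powr (1 / (8 * real d ^ r))))
              (\<lambda>hs. balanced A N n * balanced A N (n + poly p (sigma x hs)))))\<bar>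
          \<ge> density A N ^ (2 ^ (m - 1) + 1) / 2 ^ (3 * 2 ^ (m - 1) - 2)"
    and "N \<ge> Max {Nm,
                   nat \<lceil>(2 ^ (3 * 2 ^ m - 1) / \<delta>0 ^ (2 ^ m + 1)) ^ (4 * d ^ r)\<rceil>,
                   nat \<lceil>((2 ^ (3 * 2 ^ m) * real (2 * d + 2) ^ (2 * d + 2) * (Mp p)\<^sup>2)
                           / \<delta>0 ^ (2 ^ m + 1))\<^sup>2\<rceil>}"
  shows "\<exists>p'. gauss_poly p' \<and> degree p' = d - m \<and> 0 < Mp p' \<and>
           Mp p' \<le> 2 ^ (2 * d + 1) * Mp p * real N powr (1 / (8 * real d ^ (r - 1))) \<and>
           \<bar>avg (gbox (real N)) (\<lambda>n. avg D (\<lambda>x.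
              avg (gtuples (d - m - 1) (real N powr (1 / (8 * real d ^ r))))
                (\<lambda>hs. balanced A N n * balanced A N (n + poly p' (sigma x hs)))))\<bar>
           \<ge> density A N ^ (2 ^ m + 1) / 2 ^ (3 * 2 ^ m - 2)"
proof -
  define X where "X = gbox (real N)"
  define f where "f = balanced A N"
  define \<delta> where "\<delta> = density A N"
  define H where "H = real N powr (1 / (8 * real d ^ r))"
  define L where "L = real N powr (1 / (2 * real d))"
  define B where "B = gbox H"
  define K where "K = d - m"
  define G' where "G' = gtuples (K - 1) H"
  define U where "U = D \<times> G'"
  define a where "a = (2::nat) ^ (m - 1)"
  define P where "P = (\<lambda>(u::complex \<times> complex list) h. poly p (sigma (fst u) (snd u) + h))"
  define w0 where "w0 = \<delta>0 ^ (2*a+1)"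
  define e0 where "e0 = real N * (real (d+1) * Mp p * real (2*d+2) ^ d * sqrt (real N))"
  define cB where "cB = real (card B)"
  define cU where "cU = real (card U)"

  have N1: "real N \<ge> 1" using assms(9) by simp
  have a1: "a \<ge> 1" unfolding a_def by simp
  have m2: "(2::nat) ^ m = 2 * a"
  proof -
    obtain m' where "m = Suc m'" using assms(5) by (cases m) auto
    thus ?thesis unfolding a_def by simp
  qed
  have e6: "3 * (2 * a) = 6 * a" by simp
  have K1: "K \<ge> 1" and Kd: "K \<le> d - 1" and KS: "K = Suc (K - 1)" unfolding K_def using assms(5,6,1) by auto
  have Kd1: "K + 1 \<le> d" using Kd assms(1) by linarith
  have degp: "degree p = K + 1" unfolding K_def using assms(8) by simp
  have pnz: "p \<noteq> 0" using degp by auto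
  have Mp2: "Mp p \<ge> 2" by (rule Mp_ge2[OF pnz assms(7)])
  have w0pos: "w0 > 0" unfolding w0_def using assms(3) by simp
  have w0le1: "w0 \<le> 1" unfolding w0_def using assms(3,4) by (intro power_le_one) auto

  have finX: "finite X" unfolding X_def by simp
  have cardX: "real (card X) = real N ^ 2" unfolding X_def by (simp add: card_gbox_N)
  have finA: "finite A" using finite_subset[OF assms(12)] by simp
  have cardA: "card A \<le> N^2" using card_mono[OF _ assms(12)] card_gbox_N by simp
  have \<delta>def: "\<delta> = real (card A) / real N ^ 2" unfolding \<delta>_def density_def by simp
  have \<delta>0\<delta>: "\<delta>0 \<le> \<delta>" unfolding \<delta>_def using assms(13) .
  have \<delta>pos: "\<delta> > 0" using \<delta>0\<delta> assms(3) by simp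
  have \<delta>le1: "\<delta> \<le> 1" unfolding \<delta>def using cardA N1
    by (simp add: divide_le_eq)
  have cA: "real (card A) = \<delta> * real N ^ 2" unfolding \<delta>def using N1 by simp

  have fdef: "\<And>z. f z = indicator A z - \<delta> * indicator X z"
    unfolding f_def balanced_def \<delta>_def X_def by simp
  have fsupp: "\<And>z. z \<notin> X \<Longrightarrow> f z = 0" using assms(12) unfolding fdef X_def by (auto simp: indicator_def)
  have fbnd: "\<And>z. \<bar>f z\<bar> \<le> 1" using \<delta>pos \<delta>le1 assms(12) unfolding fdef X_def by (auto simp: indicator_def)
  have ffbnd: "\<And>z w. \<bar>f z * f w\<bar> \<le> 1"
    using fbnd by (simp add: abs_mult) (metis abs_ge_zero mult_le_one)
  have fsq: "(\<Sum>n\<in>X. (f n)\<^sup>2) \<le> \<delta> * real N ^ 2"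
  proof -
    have "(\<Sum>n\<in>X. (f n)\<^sup>2) = (\<Sum>n\<in>X. (1 - 2 * \<delta>) * indicator A n + \<delta>\<^sup>2)"
      by (rule sum.cong[OF refl]) (auto simp: fdef indicator_def power2_eq_square algebra_simps)
    also have "\<dots> = (1 - 2 * \<delta>) * (\<Sum>n\<in>X. (indicator A n :: real)) + \<delta>\<^sup>2 * real (card X)"
      by (simp add: sum.distrib sum_distrib_left[symmetric])
    also have "(\<Sum>n\<in>X. (indicator A n :: real)) = real (card A)"
    proof -
      have "X \<inter> A = A" using assms(12) X_def by auto
      moreover have "(\<Sum>n\<in>X. (indicator A n :: real)) = (\<Sum>n\<in>X \<inter> A. 1)"
        using sum.inter_restrict[OF finX, of "\<lambda>_. 1::real" A] by (simp add: indicator_def of_bool_def)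
      ultimately show ?thesis by simp
    qed
    also have "(1 - 2 * \<delta>) * real (card A) + \<delta>\<^sup>2 * real (card X) = \<delta> * real N ^ 2 - \<delta>\<^sup>2 * real N ^ 2" unfolding cA cardX by (simp add: algebra_simps power2_eq_square)
    also have "\<dots> \<le> \<delta> * real N ^ 2" by simp
    finally show ?thesis .
  qed

  have dr: "real d ^ r = real d * real d ^ (r - 1)"
  proof -
    obtain r' where "r = Suc r'" using assms(2) by (cases r) auto
    thus ?thesis by simp
  qed
  have drpos: "real d ^ (r-1) \<ge> 1" using assms(1) by (simp add: one_le_power)
  have H1: "H \<ge> 1" unfolding H_def using N1 by (intro ge_one_powr_ge_zero) auto
  have L1: "L \<ge> 1" unfolding L_def using N1 by (intro ge_one_powr_ge_zero) auto
  have HL: "H \<le> L" unfolding H_def L_def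
  proof (rule powr_mono[OF _ N1])
    have "real d * 1 \<le> real d * real d ^ (r - 1)" by (rule mult_left_mono[OF drpos]) simp
    hence "real d \<le> real d ^ r" using dr by simp
    hence "2 * real d \<le> 8 * real d ^ r" using assms(1) by linarith
    thus "1 / (8 * real d ^ r) \<le> 1 / (2 * real d)" using assms(1) by (intro divide_left_mono) auto
  qed
  have Ld: "L ^ d = sqrt (real N)"
  proof -
    have ex: "real d * (1 / (2 * real d)) = 1/2" using assms(1) by simp
    have "L ^ d = real N powr (real d * (1 / (2 * real d)))" unfolding L_def
      using N1 by (subst powr_power) auto
    thus ?thesis unfolding ex using powr_half_sqrt N1 by simp
  qed
  have Hd: "H ^ d = real N powr (1 / (8 * real d ^ (r - 1)))"
  proof -
    have ex: "real d * (1 / (8 * real d ^ r)) = 1 / (8 * real d ^ (r - 1))" unfolding dr using assms(1) by simp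
    have "H ^ d = real N powr (real d * (1 / (8 * real d ^ r)))" unfolding H_def
      using N1 by (subst powr_power) auto
    thus ?thesis unfolding ex .
  qed

  have NZ: "(2 ^ (6*a - 1) / w0) ^ (4 * d ^ r) \<le> real N"
    using assms(17) unfolding m2 e6 w0_def by simp
  have NQ: "((2 ^ (6*a) * real (2 * d + 2) ^ (2 * d + 2) * (Mp p)\<^sup>2) / w0)\<^sup>2 \<le> real N"
    using assms(17) unfolding m2 e6 w0_def by simp
  have Qnn: "0 \<le> (2 ^ (6*a) * real (2 * d + 2) ^ (2 * d + 2) * (Mp p)\<^sup>2) / w0" using w0pos by simp
  have sqrtN: "sqrt (real N) \<ge> (2 ^ (6*a) * real (2 * d + 2) ^ (2 * d + 2) * (Mp p)\<^sup>2) / w0"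
    using real_sqrt_le_mono[OF NQ] Qnn w0pos by (simp add: abs_of_pos)
  have H2: "H\<^sup>2 \<ge> 2 ^ (6*a - 1) / w0"
  proof -
    define n0 where "n0 = 4 * d ^ r"
    have n0pos: "n0 > 0" unfolding n0_def using assms(1) by simp
    define Z where "Z = (2::real) ^ (6*a - 1) / w0"
    have Zpos: "Z > 0" unfolding Z_def using w0pos by simp
    have ee: "1 / (8 * real d ^ r) + 1 / (8 * real d ^ r) = 1 / real n0" unfolding n0_def using assms(1) by simp
    have "Z = (Z ^ n0) powr (1 / real n0)"
      using Zpos n0pos by (simp add: powr_realpow[symmetric] powr_powr)
    also have "\<dots> \<le> real N powr (1 / real n0)"
      using NZ[folded Z_def n0_def] Zpos by (intro powr_mono2) auto
    also have "\<dots> = H\<^sup>2" unfolding H_def power2_eq_square powr_add[symmetric] ee ..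
    finally show ?thesis unfolding Z_def .
  qed

  have finB: "finite B" unfolding B_def by simp
  have cB4: "cB \<ge> H\<^sup>2 / 4"
  proof -
    have f1: "H - 1 < real_of_int \<lfloor>H\<rfloor>" by (rule real_of_int_floor_gt_diff_one)
    have f2: "1 \<le> real_of_int \<lfloor>H\<rfloor>" using H1 by simp
    have fl: "real_of_int \<lfloor>H\<rfloor> \<ge> H / 2" using f1 f2 by linarith
    have "cB = (real_of_int \<lfloor>H\<rfloor>)\<^sup>2" unfolding cB_def B_def card_gbox using H1 by simp
    moreover have "(H / 2)\<^sup>2 \<le> (real_of_int \<lfloor>H\<rfloor>)\<^sup>2" using fl H1 by (intro power_mono) auto
    ultimately show ?thesis by (simp add: power_divide)
  qed
  have cBinv: "1 / cB \<le> w0 / 2 ^ (6*a - 3)"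
  proof -
    have e: "(2::real) ^ (6*a - 1) = 4 * 2 ^ (6*a - 3)"
    proof -
      have "6*a - 1 = 2 + (6*a - 3)" using a1 by simp
      thus ?thesis by (simp add: power_add)
    qed
    have q: "2 ^ (6*a - 3) / w0 = (4 * 2 ^ (6*a - 3) / w0) / 4" by simp
    have "(4 * 2 ^ (6*a - 3) / w0) / 4 \<le> H\<^sup>2 / 4" using H2[unfolded e] by (intro divide_right_mono) auto
    hence cbq: "cB \<ge> 2 ^ (6*a - 3) / w0" using cB4 unfolding q by linarith
    have qpos: "2 ^ (6*a - 3) / w0 > 0" using w0pos by simp
    have "inverse cB \<le> inverse (2 ^ (6*a - 3) / w0)" by (rule le_imp_inverse_le[OF cbq qpos])
    thus ?thesis by (simp add: inverse_eq_divide)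
  qed
  have cB2: "cB \<ge> 2"
  proof -
    have "(2::real) ^ 5 \<le> 2 ^ (6*a - 1)" using a1 by (intro power_increasing) auto
    hence t1: "(32::real) \<le> 2 ^ (6*a - 1)" by simp
    have "2 ^ (6*a - 1) * w0 \<le> 2 ^ (6*a - 1)" using w0le1 by (simp add: mult_left_le)
    hence "2 ^ (6*a - 1) \<le> 2 ^ (6*a - 1) / w0" using w0pos by (simp add: le_divide_eq)
    thus ?thesis using cB4 H2 t1 by linarith
  qed
  have cBpos: "cB > 0" using cB2 by simp
  obtain h0 k0 where hk0: "h0 \<in> B" "k0 \<in> B" "h0 \<noteq> k0"
  proof -
    have c2: "card B \<ge> 2" using cB2 unfolding cB_def by simp
    hence "B \<noteq> {}" by auto
    then obtain x where x: "x \<in> B" by blast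
    have "card (B - {x}) > 0" using c2 x by (simp add: card_Diff_singleton)
    hence "B - {x} \<noteq> {}" using card_gt_0_iff by blast
    then obtain y where y: "y \<in> B - {x}" by blast
    show ?thesis using that[of x y] x y by auto
  qed

  have finG': "finite G'" unfolding G'_def by simp
  have finU: "finite U" unfolding U_def G'_def using finite_subset[OF assms(15)] by simp
  have cUpos: "cU > 0"
  proof -
    have "card (gbox H) > 0" using cBpos unfolding cB_def B_def by simp
    hence "card G' > 0" unfolding G'_def by (rule card_gtuples_pos)
    moreover have "card D > 0" using assms(14) finite_subset[OF assms(15)] by (simp add: card_gt_0_iff)
    ultimately show ?thesis unfolding cU_def U_def by (simp add: card_cartesian_product)
  qed

  have RL1: "1 \<le> real (2*d+2) * L" using L1 mult_mono[of 1 "real (2*d+2)" 1 L] by simp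
  have zbound: "max 1 (norm (sigma (fst u) (snd u) + h)) \<le> real (2*d+2) * L" if uU: "u \<in> U" and hBB: "h \<in> B" for u h
  proof -
    obtain x hs where u: "u = (x, hs)" "x \<in> D" "hs \<in> G'" using uU unfolding U_def by auto
    have "norm x \<le> 2 * (2 * real N powr (1 / (2 * real d)))" using u assms(15) gbox_norm by blast
    hence nx: "norm x \<le> 4 * L" unfolding L_def by simp
    have hsm: "length hs = K - 1 \<and> set hs \<subseteq> gbox H" using u(3) unfolding G'_def by (rule gtuples_mem)
    have "norm (sum_list hs) \<le> real (K - 1) * (2 * H)"
      using norm_sum_list_gbox[of hs H] hsm by simp
    hence ns: "norm (sum_list hs) \<le> real (K - 1) * (2 * L)" using HL
      by (smt (verit) mult_left_mono of_nat_0_le_iff)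
    have nh: "norm h \<le> 2 * L" using gbox_norm[of h H] hBB[unfolded B_def] HL by simp
    have "norm (sigma x hs + h) \<le> norm x + norm (sum_list hs) + norm h"
      unfolding sigma_def by (smt (verit) norm_triangle_ineq)
    also have "\<dots> \<le> 4 * L + real (K - 1) * (2 * L) + 2 * L" using nx ns nh by simp
    also have "\<dots> = (2 * real (K - 1) + 6) * L" by (simp add: algebra_simps)
    also have "\<dots> \<le> real (2*d+2) * L"
    proof -
      have "real (K - 1) \<le> real d - 2" using Kd K1 assms(1) by linarith
      hence "2 * real (K - 1) + 6 \<le> real (2*d+2)" by simp
      thus ?thesis using L1 by (intro mult_right_mono) auto
    qed
    finally show ?thesis using RL1 u by simp
  qed
  have Pbound: "2 * real N * norm (P u h) \<le> e0" if uU: "u \<in> U" and hBB: "h \<in> B" for u h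
  proof -
    let ?z = "sigma (fst u) (snd u) + h"
    have "norm (P u h) \<le> real (degree p + 1) * (Mp p / 2) * (max 1 (norm ?z)) ^ degree p"
      unfolding P_def by (rule poly_norm_bound)
    also have "\<dots> \<le> real (d + 1) * (Mp p / 2) * (real (2*d+2) * L) ^ d"
    proof (intro mult_mono)
      show "real (degree p + 1) \<le> real (d + 1)" using degp Kd1 by simp
      have "(max 1 (norm ?z)) ^ degree p \<le> (real (2*d+2) * L) ^ degree p"
        using zbound[OF uU hBB] by (intro power_mono) auto
      also have "\<dots> \<le> (real (2*d+2) * L) ^ d"
        using degp Kd1 RL1 by (intro power_increasing) auto
      finally show "(max 1 (norm ?z)) ^ degree p \<le> (real (2*d+2) * L) ^ d" .
    qed (use Mp2 in auto)
    also have "\<dots> = real (d + 1) * (Mp p / 2) * real (2*d+2) ^ d * sqrt (real N)"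
      unfolding power_mult_distrib Ld by simp
    finally have nb: "norm (P u h) \<le> real (d + 1) * (Mp p / 2) * real (2*d+2) ^ d * sqrt (real N)" .
    have "2 * real N * norm (P u h) \<le> 2 * real N * (real (d + 1) * (Mp p / 2) * real (2*d+2) ^ d * sqrt (real N))"
      by (rule mult_left_mono[OF nb]) simp
    also have "\<dots> = e0" unfolding e0_def by simp
    finally show ?thesis .
  qed
  have Pgauss: "gauss_int (P u h)" if uU: "u \<in> U" and hBB: "h \<in> B" for u h
  proof -
    obtain x hs where u: "u = (x, hs)" "x \<in> D" "hs \<in> G'" using uU unfolding U_def by auto
    have "gauss_int x" using u assms(15) gbox_gauss by blast
    moreover have "\<And>z. z \<in> set hs \<Longrightarrow> gauss_int z" using u gtuples_mem gbox_gauss unfolding G'_def by blast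
    moreover have "gauss_int h" using hBB gbox_gauss unfolding B_def by blast
    ultimately show ?thesis unfolding P_def u(1) sigma_def using assms(7)
      by (intro gauss_int_poly gauss_int_add gauss_int_sum_list) auto
  qed

  have G_eq: "gtuples (d - m) H = gtuples (Suc (K - 1)) H" unfolding K_def[symmetric]
    by (rule arg_cong[where f="\<lambda>j. gtuples j H", OF KS])
  have cG: "real (card (gtuples (d - m) H)) = cB * real (card G')"
    unfolding G_eq card_gtuples_Suc cB_def B_def G'_def by simp
  have cUeq: "cU = real (card D) * real (card G')" unfolding cU_def U_def by (simp add: card_cartesian_product)
  define S0 where "S0 = (\<Sum>n\<in>X. \<Sum>u\<in>U. \<Sum>h\<in>B. f n * f (n + P u h))"
  have inner: "avg (gtuples (d - m) H) (\<lambda>hs. f n * f (n + poly p (sigma x hs)))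
      = (\<Sum>hs\<in>G'. \<Sum>h\<in>B. f n * f (n + P (x, hs) h)) / (cB * real (card G'))" for n x
  proof -
    have "(\<Sum>hs\<in>gtuples (d - m) H. f n * f (n + poly p (sigma x hs))) = (\<Sum>h\<in>B. \<Sum>hs\<in>G'. f n * f (n + P (x, hs) h))"
      unfolding G_eq sum_gtuples_Suc B_def G'_def P_def by (simp add: sigma_Cons)
    also have "\<dots> = (\<Sum>hs\<in>G'. \<Sum>h\<in>B. f n * f (n + P (x, hs) h))" by (rule sum.swap)
    finally show ?thesis unfolding avg_def cG by simp
  qed
  have mid: "avg D (\<lambda>x. avg (gtuples (d - m) H) (\<lambda>hs. f n * f (n + poly p (sigma x hs))))
      = (\<Sum>u\<in>U. \<Sum>h\<in>B. f n * f (n + P u h)) / (cU * cB)" for n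
  proof -
    have "(\<Sum>u\<in>U. \<Sum>h\<in>B. f n * f (n + P u h)) = (\<Sum>x\<in>D. \<Sum>hs\<in>G'. \<Sum>h\<in>B. f n * f (n + P (x, hs) h))"
      unfolding U_def by (rule sum.cartesian_product')
    thus ?thesis by (simp only: inner) (simp add: avg_def cUeq sum_divide_distrib[symmetric] mult_ac)
  qed
  have hypavg: "avg X (\<lambda>n. avg D (\<lambda>x. avg (gtuples (d - m) H) (\<lambda>hs. f n * f (n + poly p (sigma x hs)))))
      = S0 / (real N ^ 2 * cU * cB)"
    by (simp only: mid) (simp add: avg_def S0_def cardX sum_divide_distrib[symmetric] mult_ac)
  define \<epsilon> where "\<epsilon> = \<delta> ^ (a + 1) / 2 ^ (3 * a - 2)"
  have \<epsilon>pos: "\<epsilon> > 0" unfolding \<epsilon>_def using \<delta>pos by simp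
  have hyp: "\<epsilon> \<le> \<bar>S0\<bar> / (real N ^ 2 * cU * cB)"
  proof -
    have "\<epsilon> \<le> \<bar>avg X (\<lambda>n. avg D (\<lambda>x. avg (gtuples (d - m) H) (\<lambda>hs. f n * f (n + poly p (sigma x hs)))))\<bar>"
      using assms(16) unfolding \<epsilon>_def f_def \<delta>_def H_def X_def a_def .
    thus ?thesis unfolding hypavg using N1 cUpos cBpos by (simp add: abs_divide)
  qed
  have denpos: "real N ^ 2 * cU * cB > 0" using N1 cUpos cBpos by simp
  have S0ge: "\<epsilon> * (real N ^ 2 * cU * cB) \<le> \<bar>S0\<bar>" using hyp denpos by (simp add: le_divide_eq)

  define g where "g = (\<lambda>n u. \<Sum>h\<in>B. f (n + P u h))"
  have S0cs: "S0 = (\<Sum>(n,u)\<in>X\<times>U. f n * g n u)"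
    unfolding S0_def g_def by (simp add: sum.cartesian_product[symmetric] sum_distrib_left)
  have CS: "S0\<^sup>2 \<le> (\<Sum>(n,u)\<in>X\<times>U. (f n)\<^sup>2) * (\<Sum>(n,u)\<in>X\<times>U. (g n u)\<^sup>2)"
    unfolding S0cs using Cauchy_Schwarz_ineq_sum[of "\<lambda>z. f (fst z)" "\<lambda>z. g (fst z) (snd z)" "X\<times>U"]
    by (simp add: case_prod_unfold)
  have fsqU: "(\<Sum>(n,u)\<in>X\<times>U. (f n)\<^sup>2) = cU * (\<Sum>n\<in>X. (f n)\<^sup>2)"
    by (simp add: sum.cartesian_product[symmetric] cU_def sum_distrib_left)
  define R where "R = (\<lambda>h k. \<Sum>n\<in>X. \<Sum>u\<in>U. f (n + P u h) * f (n + P u k))"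
  define T where "T = (\<lambda>h k. \<Sum>n\<in>X. \<Sum>u\<in>U. f n * f (n + (P u k - P u h)))"
  have gsq: "(\<Sum>(n,u)\<in>X\<times>U. (g n u)\<^sup>2) = (\<Sum>h\<in>B. \<Sum>k\<in>B. R h k)"
  proof -
    have "(\<Sum>(n,u)\<in>X\<times>U. (g n u)\<^sup>2) = (\<Sum>n\<in>X. \<Sum>u\<in>U. \<Sum>h\<in>B. \<Sum>k\<in>B. f (n + P u h) * f (n + P u k))"
      by (simp add: sum.cartesian_product[symmetric] g_def power2_eq_square sum_product)
    also have "\<dots> = (\<Sum>h\<in>B. \<Sum>k\<in>B. \<Sum>n\<in>X. \<Sum>u\<in>U. f (n + P u h) * f (n + P u k))" by (rule swap4)
    finally show ?thesis unfolding R_def .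
  qed
  have gsqge: "(\<Sum>h\<in>B. \<Sum>k\<in>B. R h k) \<ge> \<epsilon>\<^sup>2 * real N ^ 2 * cU * cB\<^sup>2 / \<delta>"
  proof -
    have "(\<epsilon> * (real N ^ 2 * cU * cB))\<^sup>2 \<le> \<bar>S0\<bar>\<^sup>2"
      by (rule power_mono[OF S0ge]) (use \<epsilon>pos denpos in simp)
    hence "(\<epsilon> * (real N ^ 2 * cU * cB))\<^sup>2 \<le> S0\<^sup>2" by simp
    also have "\<dots> \<le> (cU * (\<delta> * real N ^ 2)) * (\<Sum>h\<in>B. \<Sum>k\<in>B. R h k)"
    proof -
      have "0 \<le> (\<Sum>(n,u)\<in>X\<times>U. (g n u)\<^sup>2)" by (intro sum_nonneg) (auto simp: case_prod_unfold)
      moreover have "cU * (\<Sum>n\<in>X. (f n)\<^sup>2) \<le> cU * (\<delta> * real N ^ 2)" using fsq cUpos by simp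
      ultimately show ?thesis using CS unfolding fsqU gsq by (meson mult_right_mono order_trans)
    qed
    finally have ineq: "(\<epsilon> * (real N ^ 2 * cU * cB))\<^sup>2 \<le> (cU * (\<delta> * real N ^ 2)) * (\<Sum>h\<in>B. \<Sum>k\<in>B. R h k)" .
    have pos2: "cU * (\<delta> * real N ^ 2) > 0" using cUpos \<delta>pos N1 by simp
    have "(\<epsilon> * (real N ^ 2 * cU * cB))\<^sup>2 / (cU * (\<delta> * real N ^ 2)) \<le> (\<Sum>h\<in>B. \<Sum>k\<in>B. R h k)"
      using ineq by (subst pos_divide_le_eq[OF pos2]) (metis mult.commute)
    moreover have "(\<epsilon> * (real N ^ 2 * cU * cB))\<^sup>2 / (cU * (\<delta> * real N ^ 2)) = \<epsilon>\<^sup>2 * real N ^ 2 * cU * cB\<^sup>2 / \<delta>"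
      using cUpos \<delta>pos N1 assms(9) by (simp add: field_simps power2_eq_square)
    ultimately show ?thesis by simp
  qed

  have RT: "\<bar>R h k - T h k\<bar> \<le> cU * e0" if hk: "h \<in> B" "k \<in> B" for h k
  proof -
    have Rs: "R h k = (\<Sum>u\<in>U. \<Sum>n\<in>X. f (n + P u h) * f (n + P u k))" unfolding R_def by (rule sum.swap)
    have Ts: "T h k = (\<Sum>u\<in>U. \<Sum>n\<in>X. f n * f (n + (P u k - P u h)))" unfolding T_def by (rule sum.swap)
    have each: "\<bar>(\<Sum>n\<in>X. f (n + P u h) * f (n + P u k)) - (\<Sum>n\<in>X. f n * f (n + (P u k - P u h)))\<bar> \<le> e0"
      if u: "u \<in> U" for u
    proof -
      define F where "F = (\<lambda>m. f m * f (m + (P u k - P u h)))"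
      have eq1: "(\<Sum>n\<in>X. f (n + P u h) * f (n + P u k)) = (\<Sum>n\<in>X. F (n + P u h))"
        unfolding F_def by (intro sum.cong refl) (simp add: algebra_simps)
      have eq2: "(\<Sum>n\<in>X. f n * f (n + (P u k - P u h))) = (\<Sum>n\<in>X. F n)"
        unfolding F_def by simp
      have "\<bar>(\<Sum>n\<in>X. f (n + P u h) * f (n + P u k)) - (\<Sum>n\<in>X. f n * f (n + (P u k - P u h)))\<bar>
          = \<bar>(\<Sum>n\<in>X. F (n + P u h)) - (\<Sum>n\<in>X. F n)\<bar>" unfolding eq1 eq2 ..
      also have "\<dots> \<le> real N * (\<bar>Re (P u h)\<bar> + \<bar>Im (P u h)\<bar>)"
        unfolding X_def
        by (rule shift_sum) (auto simp: F_def fsupp[unfolded X_def] ffbnd Pgauss[OF u hk(1)])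
      also have "\<dots> \<le> real N * (2 * norm (P u h))"
        by (rule mult_left_mono) (use abs_Re_le_cmod[of "P u h"] abs_Im_le_cmod[of "P u h"] in auto)
      also have "\<dots> = 2 * real N * norm (P u h)" by simp
      also have "\<dots> \<le> e0" by (rule Pbound[OF u hk(1)])
      finally show ?thesis .
    qed
    have "\<bar>R h k - T h k\<bar> = \<bar>\<Sum>u\<in>U. (\<Sum>n\<in>X. f (n + P u h) * f (n + P u k)) - (\<Sum>n\<in>X. f n * f (n + (P u k - P u h)))\<bar>"
      unfolding Rs Ts by (simp add: sum_subtractf)
    also have "\<dots> \<le> (\<Sum>u\<in>U. e0)" by (rule order_trans[OF sum_abs]) (rule sum_mono, erule each)
    also have "\<dots> = cU * e0" unfolding cU_def by simp
    finally show ?thesis .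
  qed
  have Tdiag: "T h h \<le> real N ^ 2 * cU" for h
  proof -
    have "T h h \<le> (\<Sum>n\<in>X. \<Sum>u\<in>U. 1)" unfolding T_def using ffbnd
      by (intro sum_mono) (meson abs_le_D1)
    thus ?thesis using cardX unfolding cU_def by simp
  qed
  define Off where "Off = {hk \<in> B \<times> B. fst hk \<noteq> snd hk}"
  have finOff: "finite Off" unfolding Off_def using finB by simp
  have BBeq: "B \<times> B = Off \<union> (\<lambda>h. (h, h)) ` B" unfolding Off_def by auto
  have BB: "(\<Sum>h\<in>B. \<Sum>k\<in>B. T h k) = (\<Sum>hk\<in>Off. T (fst hk) (snd hk)) + (\<Sum>h\<in>B. T h h)"
  proof -
    have "(\<Sum>h\<in>B. \<Sum>k\<in>B. T h k) = (\<Sum>hk\<in>B\<times>B. T (fst hk) (snd hk))"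
      by (simp add: sum.cartesian_product case_prod_unfold)
    also have "\<dots> = (\<Sum>hk\<in>Off. T (fst hk) (snd hk)) + (\<Sum>hk\<in>(\<lambda>h. (h, h)) ` B. T (fst hk) (snd hk))"
      unfolding BBeq by (rule sum.union_disjoint) (use finOff finB in \<open>auto simp: Off_def\<close>)
    also have "(\<Sum>hk\<in>(\<lambda>h. (h, h)) ` B. T (fst hk) (snd hk)) = (\<Sum>h\<in>B. T h h)"
      by (subst sum.reindex) (auto simp: inj_on_def)
    finally show ?thesis .
  qed
  define W where "W = \<epsilon>\<^sup>2 / \<delta> - e0 / real N ^ 2 - 1 / cB"
  have Eb: "e0 / real N ^ 2 \<le> \<delta>0 ^ (2*a+1) / 2 ^ (6*a+1)"
  proof -
    define s where "s = sqrt (real N)"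
    have spos: "s > 0" using N1 unfolding s_def by simp
    have sN: "real N = s\<^sup>2" unfolding s_def using N1 by simp
    have "e0 / real N ^ 2 = real (d+1) * Mp p * real (2*d+2) ^ d / s"
      unfolding e0_def s_def[symmetric] using spos by (simp add: sN field_simps power2_eq_square)
    also have "\<dots> \<le> w0 / 2 ^ (6*a+1)" unfolding s_def by (rule E_bound[OF sqrtN Mp2 w0pos])
    finally show ?thesis unfolding w0_def .
  qed
  have Wge: "W \<ge> \<delta> ^ (2*a+1) / 2 ^ (6*a-2)"
    unfolding W_def \<epsilon>_def by (rule final_arith[OF a1 assms(3) \<delta>0\<delta> Eb cBinv[unfolded w0_def]])
  have "\<delta> ^ (2*a+1) / 2 ^ (6*a-2) > 0" using \<delta>pos by simp
  hence Wpos: "W > 0" using Wge by linarith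
  have Offsum: "(\<Sum>hk\<in>Off. T (fst hk) (snd hk)) \<ge> cB\<^sup>2 * (real N ^ 2 * cU * W)"
  proof -
    have s0: "(\<Sum>h\<in>B. \<Sum>k\<in>B. T h k) \<ge> (\<Sum>h\<in>B. \<Sum>k\<in>B. R h k - cU * e0)"
    proof (intro sum_mono)
      fix h k assume "h \<in> B" "k \<in> B"
      from RT[OF this] show "R h k - cU * e0 \<le> T h k" by (simp add: abs_le_iff)
    qed
    have s1e: "(\<Sum>h\<in>B. \<Sum>k\<in>B. R h k - cU * e0) = (\<Sum>h\<in>B. \<Sum>k\<in>B. R h k) - cB\<^sup>2 * cU * e0"
      by (simp add: sum_subtractf cB_def power2_eq_square mult_ac)
    have s2: "(\<Sum>h\<in>B. T h h) \<le> (\<Sum>h\<in>B. real N ^ 2 * cU)"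
      by (rule sum_mono) (rule Tdiag)
    have s2e: "(\<Sum>h\<in>B. real N ^ 2 * cU) = cB * (real N ^ 2 * cU)" unfolding cB_def by simp
    have "cB\<^sup>2 * (real N ^ 2 * cU * W) = \<epsilon>\<^sup>2 * real N ^ 2 * cU * cB\<^sup>2 / \<delta> - cB\<^sup>2 * cU * e0 - cB * (real N ^ 2 * cU)"
      unfolding W_def using cBpos N1 \<delta>pos assms(9) by (simp add: field_simps power2_eq_square)
    thus ?thesis using s0 s1e s2 s2e gsqge BB by linarith
  qed
  obtain hk where hk: "hk \<in> Off" "T (fst hk) (snd hk) \<ge> real N ^ 2 * cU * W"
  proof (rule ccontr)
    assume "\<not> thesis"
    hence lt: "\<And>hk. hk \<in> Off \<Longrightarrow> T (fst hk) (snd hk) < real N ^ 2 * cU * W" using that by (meson not_le)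
    have ne: "Off \<noteq> {}" using hk0 unfolding Off_def by auto
    have "(\<Sum>hk\<in>Off. T (fst hk) (snd hk)) < (\<Sum>hk\<in>Off. real N ^ 2 * cU * W)"
      by (rule sum_strict_mono[OF finOff ne lt])
    also have "\<dots> = real (card Off) * (real N ^ 2 * cU * W)" by simp
    also have "\<dots> \<le> cB\<^sup>2 * (real N ^ 2 * cU * W)"
    proof (rule mult_right_mono)
      have "card Off \<le> card (B \<times> B)" unfolding Off_def using finB by (intro card_mono) auto
      thus "real (card Off) \<le> cB\<^sup>2" unfolding cB_def power2_eq_square of_nat_mult[symmetric] of_nat_le_iff
        by (simp add: card_cartesian_product)
      show "0 \<le> real N ^ 2 * cU * W" using Wpos cUpos by simp
    qed
    finally show False using Offsum by linarith
  qed
  define h where "h = fst hk"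
  define k where "k = snd hk"
  have hB: "h \<in> B" and kB: "k \<in> B" and hk_ne: "k \<noteq> h" using hk(1) unfolding Off_def h_def k_def by auto
  have hB': "h \<in> gbox H" and kB': "k \<in> gbox H" using hB kB unfolding B_def by auto
  define p' where "p' = dpoly p h k"
  have degp': "degree p' = d - m" unfolding p'_def using degree_dpoly[of p k h] hk_ne degp K_def by simp
  have concl_avg: "avg X (\<lambda>n. avg D (\<lambda>x. avg G' (\<lambda>hs. f n * f (n + poly p' (sigma x hs)))))
      = T h k / (real N ^ 2 * cU)"
  proof -
    have i: "avg G' (\<lambda>hs. f n * f (n + poly p' (sigma x hs))) = (\<Sum>hs\<in>G'. f n * f (n + (P (x, hs) k - P (x, hs) h))) / real (card G')" for n x
      unfolding avg_def p'_def poly_dpoly P_def by simp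
    have m: "avg D (\<lambda>x. avg G' (\<lambda>hs. f n * f (n + poly p' (sigma x hs)))) = (\<Sum>u\<in>U. f n * f (n + (P u k - P u h))) / cU" for n
    proof -
      have "(\<Sum>u\<in>U. f n * f (n + (P u k - P u h))) = (\<Sum>x\<in>D. \<Sum>hs\<in>G'. f n * f (n + (P (x, hs) k - P (x, hs) h)))"
        unfolding U_def by (rule sum.cartesian_product')
      thus ?thesis by (simp only: i) (simp add: avg_def cUeq sum_divide_distrib[symmetric] mult_ac)
    qed
    show ?thesis by (simp only: m) (simp add: avg_def T_def cardX sum_divide_distrib[symmetric] mult_ac)
  qed
  have concl_ge: "avg X (\<lambda>n. avg D (\<lambda>x. avg G' (\<lambda>hs. f n * f (n + poly p' (sigma x hs))))) \<ge> \<delta> ^ (2*a+1) / 2 ^ (6*a-2)"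
  proof -
    have "W \<le> T h k / (real N ^ 2 * cU)" using hk(2) N1 cUpos unfolding h_def k_def by (simp add: le_divide_eq mult_ac)
    thus ?thesis unfolding concl_avg using Wge by linarith
  qed
  show ?thesis
  proof (intro exI[of _ p'] conjI)
    show "gauss_poly p'" unfolding p'_def
      by (rule gauss_dpoly[OF assms(7)]) (use hB' kB' gbox_gauss in auto)
    show "degree p' = d - m" by (rule degp')
    show "0 < Mp p'" using degp' K1 K_def by (intro Mp_pos) auto
    show "Mp p' \<le> 2 ^ (2 * d + 1) * Mp p * real N powr (1 / (8 * real d ^ (r - 1)))"
      unfolding p'_def Hd[symmetric]
      by (rule Mp_dpoly) (use hB' kB' gbox_norm H1 degp Kd1 assms(1) in auto)
    show "\<bar>avg (gbox (real N)) (\<lambda>n. avg D (\<lambda>x.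
              avg (gtuples (d - m - 1) (real N powr (1 / (8 * real d ^ r))))
                (\<lambda>hs. balanced A N n * balanced A N (n + poly p' (sigma x hs)))))\<bar>
           \<ge> density A N ^ (2 ^ m + 1) / 2 ^ (3 * 2 ^ m - 2)"
      using concl_ge unfolding m2 e6 X_def f_def \<delta>_def G'_def H_def K_def by linarith
  qed
qed

end
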